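(* Let $\mathcal{C}$ be a cyclic code of length $n$ over $\mathbb{F}_q$ with $\gcd(n,q)=1$, with zero set $\mathcal{S}(\mathcal{C})$ taken with respect to a primitive $n$-th root of unity $\alpha$. Let $n_1$ be a positive integer with $n_1\mid n$ and let $\mathcal{X}\subseteq\{0,1,\ldots,n_1-1\}$. Let $\delta$ be a guaranteed lower bound on the minimum distance of the length-$n_1$ cyclic code over $\mathbb{F}_q$ whose zeros (with respect to $\beta=\alpha^{n/n_1}$) are the elements of $\mathcal{X}$ together with their $q$-cyclotomic cosets modulo $n_1$. If $$\bigcup_{j\in\mathcal{X}}\{j,\,j+n_1,\,j+2n_1,\ldots,j+n-n_1\}\subseteq\mathcal{S}(\mathcal{C}),$$ then $\mathcal{C}$ has $(r,\delta)$-all-symbol locality with $r=n_1-\delta+1$.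
   Context: Zeros: for a cyclic code $\mathcal{C}$ of length $n$, identifying $\underline{c}$ with $c(x)=\sum c_ix^i$, $\mathcal{S}(\mathcal{C})=\{j\in\{0,\ldots,n-1\}: c(\alpha^j)=0\ \forall \underline{c}\in\mathcal{C}\}$; for a length-$n_1$ cyclic code, zeros are exponents of $\beta=\alpha^{n/n_1}$ defined analogously. The $q$-cyclotomic coset of $i$ modulo $n_1$ is $\{q^j i \bmod n_1 : j\ge 0\}$. $(r,\delta)$-all-symbol locality: for every coordinate $i\in\{0,\ldots,n-1\}$ there is a set $\mathcal{I}_i\subseteq\{0,\ldots,n-1\}$ with $i\in\mathcal{I}_i$ and $|\mathcal{I}_i|\le r+\delta-1$ such that the code $\mathcal{C}$ punctured to the coordinates in $\mathcal{I}_i$ has minimum distance at least $\delta$. *)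

theory Defs
  imports Main "HOL-Library.Cardinality"
begin

definition is_word :: "nat \<Rightarrow> (nat \<Rightarrow> 'a::zero) \<Rightarrow> bool" where
  "is_word n c \<longleftrightarrow> (\<forall>i\<ge>n. c i = 0)"

text \<open>cyclic shift of a length-n word: (c_0,...,c_{n-1}) |-> (c_{n-1},c_0,...,c_{n-2})\<close>
definition cyc_shift :: "nat \<Rightarrow> (nat \<Rightarrow> 'a::zero) \<Rightarrow> nat \<Rightarrow> 'a" where
  "cyc_shift n c = (\<lambda>i. if i < n then c ((i + n - 1) mod n) else 0)"

definition cyclic_code :: "nat \<Rightarrow> (nat \<Rightarrow> 'a::field) set \<Rightarrow> bool" where
  "cyclic_code n C \<longleftrightarrow>
     (\<forall>c\<in>C. is_word n c) \<and> (\<lambda>_. 0) \<in> C \<and>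
     (\<forall>c\<in>C. \<forall>d\<in>C. (\<lambda>i. c i + d i) \<in> C) \<and>
     (\<forall>a. \<forall>c\<in>C. (\<lambda>i. a * c i) \<in> C) \<and>
     (\<forall>c\<in>C. cyc_shift n c \<in> C)"

text \<open>emb embeds the base field F_q into an extension field containing the roots of unity\<close>
definition field_embedding :: "('a::field \<Rightarrow> 'b::field) \<Rightarrow> bool" where
  "field_embedding emb \<longleftrightarrow> emb 1 = 1 \<and>
     (\<forall>x y. emb (x + y) = emb x + emb y) \<and> (\<forall>x y. emb (x * y) = emb x * emb y)"

definition primitive_root :: "nat \<Rightarrow> 'b::field \<Rightarrow> bool" where
  "primitive_root n \<alpha> \<longleftrightarrow> \<alpha> ^ n = 1 \<and> (\<forall>k. 0 < k \<and> k < n \<longrightarrow> \<alpha> ^ k \<noteq> 1)"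

definition word_eval :: "('a \<Rightarrow> 'b::comm_ring_1) \<Rightarrow> nat \<Rightarrow> (nat \<Rightarrow> 'a) \<Rightarrow> 'b \<Rightarrow> 'b" where
  "word_eval emb n c x = (\<Sum>i<n. emb (c i) * x ^ i)"

definition zero_set :: "('a \<Rightarrow> 'b::comm_ring_1) \<Rightarrow> nat \<Rightarrow> 'b \<Rightarrow> (nat \<Rightarrow> 'a) set \<Rightarrow> nat set" where
  "zero_set emb n \<alpha> C = {j. j < n \<and> (\<forall>c\<in>C. word_eval emb n c (\<alpha> ^ j) = 0)}"

definition cyclotomic_coset :: "nat \<Rightarrow> nat \<Rightarrow> nat \<Rightarrow> nat set" where
  "cyclotomic_coset q n1 i = {(q ^ j * i) mod n1 | j. True}"

definition code_with_zeros :: "('a::zero \<Rightarrow> 'b::comm_ring_1) \<Rightarrow> nat \<Rightarrow> 'b \<Rightarrow> nat set \<Rightarrow> (nat \<Rightarrow> 'a) set" where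
  "code_with_zeros emb n1 \<beta> Z = {c. is_word n1 c \<and> (\<forall>j\<in>Z. word_eval emb n1 c (\<beta> ^ j) = 0)}"

definition weight_on :: "nat set \<Rightarrow> (nat \<Rightarrow> 'a::zero) \<Rightarrow> nat" where
  "weight_on I c = card {i\<in>I. c i \<noteq> 0}"

definition min_dist_ge :: "nat \<Rightarrow> (nat \<Rightarrow> 'a::zero) set \<Rightarrow> nat \<Rightarrow> bool" where
  "min_dist_ge n C d \<longleftrightarrow> (\<forall>c\<in>C. (\<exists>i<n. c i \<noteq> 0) \<longrightarrow> d \<le> weight_on {..<n} c)"

text \<open>the code punctured to the coordinates in I has minimum distance at least d
  (punctured code = restrictions of codewords to I; linear, so distance = min nonzero weight)\<close>
definition punctured_min_dist_ge :: "(nat \<Rightarrow> 'a::zero) set \<Rightarrow> nat set \<Rightarrow> nat \<Rightarrow> bool" where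
  "punctured_min_dist_ge C I d \<longleftrightarrow> (\<forall>c\<in>C. (\<exists>i\<in>I. c i \<noteq> 0) \<longrightarrow> d \<le> weight_on I c)"

definition all_symbol_locality :: "nat \<Rightarrow> (nat \<Rightarrow> 'a::zero) set \<Rightarrow> nat \<Rightarrow> nat \<Rightarrow> bool" where
  "all_symbol_locality n C r \<delta> \<longleftrightarrow>
     (\<forall>i<n. \<exists>I. I \<subseteq> {..<n} \<and> i \<in> I \<and> card I \<le> r + \<delta> - 1 \<and> punctured_min_dist_ge C I \<delta>)"

end

theory Submission
  imports Defs "HOL-Computational_Algebra.Primes" "HOL-Algebra.Sylow" "HOL-Algebra.Multiplicative_Group"
begin

lemma ff_pow_card:
  fixes x :: "'a::{finite,field}"
  shows "x ^ CARD('a) = x"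
proof (cases "x = 0")
  case False
  have "x * (\<Prod>y\<in>UNIV-{0}. x * y) = x * x ^ (card (UNIV :: 'a set) - 1) * \<Prod>(UNIV-{0})"
    by (simp add: prod.distrib mult_ac)
  also have "x * x ^ (card (UNIV :: 'a set) - 1) = x ^ Suc (card (UNIV :: 'a set) - 1)"
    by (subst power_Suc) auto
  also have "Suc (card (UNIV :: 'a set) - 1) = card (UNIV :: 'a set)"
    using finite_UNIV_card_ge_0[where ?'a = 'a] by simp
  also have "(\<Prod>y\<in>UNIV-{0}. x * y) = (\<Prod>y\<in>UNIV-{0}. y)"
    by (rule prod.reindex_bij_witness[of _ "\<lambda>y. y / x" "\<lambda>y. x * y"]) (use False in auto)
  finally show ?thesis
    by simp
qed (use finite_UNIV_card_ge_0[where ?'a = 'a] in auto)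

lemma ff_pow_card_pow:
  fixes x :: "'a::{finite,field}"
  shows "x ^ (CARD('a) ^ s) = x"
  by (induction s) (simp_all add: ff_pow_card power_mult)

lemma ff_CHAR_prime: "prime CHAR('a::{finite,field})"
  by (rule prime_CHAR_semidom) (rule finite_imp_CHAR_pos, simp)

definition addgrp :: "'a::field monoid" where
  "addgrp = \<lparr>carrier = UNIV, monoid.mult = (+), one = 0\<rparr>"

lemma addgrp_group: "group (addgrp :: 'a::field monoid)"
  unfolding addgrp_def
  by (rule groupI) (auto simp: add.assoc intro: exI[of _ "- x" for x])

lemma addgrp_pow: "x [^]\<^bsub>(addgrp\<lparr>carrier := H\<rparr>)\<^esub> (k::nat) = of_nat k * x"
  by (induction k) (simp_all add: addgrp_def algebra_simps)

lemma ff_prime_factor_CHAR: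
  assumes r: "prime r" and rd: "r dvd CARD('a::{finite,field})"
  shows "r = CHAR('a)"
proof -
  define q where "q = CARD('a)"
  have q0: "q > 0" unfolding q_def by simp
  define a where "a = multiplicity r q"
  obtain m where qm: "q = r ^ a * m"
    unfolding a_def using multiplicity_dvd by (metis dvd_def)
  have a1: "a \<ge> 1"
  proof -
    have "multiplicity r q \<noteq> 0"
      using rd q0 r by (simp add: q_def prime_multiplicity_gt_zero_iff)
    thus ?thesis by (simp add: a_def)
  qed
  have ord: "order (addgrp :: 'a monoid) = r ^ a * m"
    using qm unfolding q_def order_def addgrp_def by simp
  have fin: "finite (carrier (addgrp :: 'a monoid))" by simp
  obtain H where H: "subgroup H (addgrp :: 'a monoid)" "card H = r ^ a"
    using sylow_thm[OF r addgrp_group ord fin] by blast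
  have "r ^ a \<ge> 2" using a1 r
  proof -
    have "r ^ 1 \<le> r ^ a" using a1 prime_gt_0_nat[OF r] by (intro power_increasing) auto
    thus ?thesis using prime_ge_2_nat[OF r] by simp
  qed
  hence "card H \<ge> 2" using H by simp
  then obtain x where x: "x \<in> H" "x \<noteq> 0"
  proof -
    have "H - {0} \<noteq> {}"
    proof
      assume "H - {0} = {}"
      hence "H \<subseteq> {0}" by blast
      hence "card H \<le> 1" using card_mono[of "{0}" H] by simp
      thus False using \<open>card H \<ge> 2\<close> by simp
    qed
    thus ?thesis using that by blast
  qed
  have gH: "group (addgrp\<lparr>carrier := H\<rparr>)"
    using subgroup.subgroup_is_group[OF H(1) addgrp_group] .
  have "x [^]\<^bsub>(addgrp\<lparr>carrier := H\<rparr>)\<^esub> order (addgrp\<lparr>carrier := H\<rparr>) = \<one>\<^bsub>(addgrp\<lparr>carrier := H\<rparr>)\<^esub>"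
    using group.pow_order_eq_1[OF gH] x by simp
  hence "x [^]\<^bsub>(addgrp\<lparr>carrier := H\<rparr>)\<^esub> card H = 0"
    by (simp add: order_def addgrp_def)
  hence "of_nat (r ^ a) * x = 0"
    using H(2) by (simp only: addgrp_pow)
  hence "of_nat r = (0::'a)" using x by simp
  hence "CHAR('a) dvd r" by (simp add: of_nat_eq_0_iff_char_dvd)
  thus ?thesis using r ff_CHAR_prime
    by (metis primes_dvd_imp_eq)
qed

lemma ff_card_prime_power: "\<exists>e. CARD('a::{finite,field}) = CHAR('a)^e"
proof -
  have p: "prime CHAR('a)" by (rule ff_CHAR_prime)
  obtain y where y: "CARD('a) = CHAR('a) ^ multiplicity CHAR('a) CARD('a) * y" "\<not> CHAR('a) dvd y"
    using multiplicity_decompose'[of "CARD('a)" "CHAR('a)"] p by auto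
  have "y = 1"
  proof (rule ccontr)
    assume "y \<noteq> 1"
    then obtain r where r: "prime r" "r dvd y" using prime_factor_nat by blast
    hence "r dvd CARD('a)" using y(1) by (metis dvd_mult dvd_refl)
    hence "r = CHAR('a)" using ff_prime_factor_CHAR r(1) by blast
    thus False using r y(2) by simp
  qed
  thus ?thesis using y(1) by auto
qed


lemma emb_props:
  fixes emb :: "'a::field \<Rightarrow> 'b::field"
  assumes "field_embedding emb"
  shows emb0: "emb 0 = 0" and emb_pow: "emb (x ^ k) = emb x ^ k"
    and emb_nat: "emb (of_nat k) = of_nat k" and emb_inj: "emb x = 0 \<longleftrightarrow> x = 0"
proof -
  have add: "\<And>x y. emb (x + y) = emb x + emb y" and mul: "\<And>x y. emb (x * y) = emb x * emb y"
    and one: "emb 1 = 1" using assms unfolding field_embedding_def by auto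
  show e0: "emb 0 = 0" using add[of 0 0] by (metis add.right_neutral add_left_cancel)
  show "emb (x ^ k) = emb x ^ k" by (induction k) (simp_all add: one mul)
  show "emb (of_nat k) = of_nat k" by (induction k) (simp_all add: one add e0)
  show "emb x = 0 \<longleftrightarrow> x = 0"
  proof
    assume h: "emb x = 0"
    show "x = 0"
    proof (rule ccontr)
      assume "x \<noteq> 0"
      hence "emb 1 = emb x * emb (inverse x)" by (simp flip: mul)
      thus False using h one by simp
    qed
  qed (simp add: e0)
qed

lemma CHAR_emb:
  fixes emb :: "'a::field \<Rightarrow> 'b::field"
  assumes "field_embedding emb"
  shows "CHAR('b) = CHAR('a)"
proof (rule CHAR_eqI)
  show "of_nat CHAR('a) = (0::'b)"
    using emb_nat[OF assms, of "CHAR('a)"] emb0[OF assms] by simp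
  fix x assume "of_nat x = (0::'b)"
  hence "emb (of_nat x) = 0" using emb_nat[OF assms] by simp
  hence "of_nat x = (0::'a)" using emb_inj[OF assms] by blast
  thus "CHAR('a) dvd x" by (simp add: of_nat_eq_0_iff_char_dvd)
qed



lemma frob_eval:
  fixes emb :: "'a::{finite,field} \<Rightarrow> 'b::field"
  assumes "field_embedding emb"
  shows "(\<Sum>t<N. emb (d t) * y ^ t) ^ (CARD('a) ^ s) = (\<Sum>t<N. emb (d t) * (y ^ (CARD('a) ^ s)) ^ t)"
proof -
  obtain e where e: "CARD('a) = CHAR('a) ^ e" using ff_card_prime_power by blast
  have pb: "prime CHAR('b)" using CHAR_emb[OF assms] ff_CHAR_prime by simp
  have m: "CARD('a) ^ s = CHAR('b) ^ (e * s)"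
    using e CHAR_emb[OF assms] by (simp add: power_mult)
  have "(\<Sum>t<N. emb (d t) * y ^ t) ^ (CARD('a) ^ s) = (\<Sum>t<N. (emb (d t) * y ^ t) ^ (CARD('a) ^ s))"
    by (rule freshmans_dream_sum'[OF pb m])
  also have "\<dots> = (\<Sum>t<N. emb (d t) * (y ^ (CARD('a) ^ s)) ^ t)"
  proof (rule sum.cong[OF refl])
    fix t
    have "emb (d t) ^ (CARD('a) ^ s) = emb (d t)"
      using emb_pow[OF assms, of "d t" "CARD('a) ^ s"] ff_pow_card_pow by metis
    thus "(emb (d t) * y ^ t) ^ (CARD('a) ^ s) = emb (d t) * (y ^ (CARD('a) ^ s)) ^ t"
      by (simp add: power_mult_distrib flip: power_mult) (simp add: mult.commute)
  qed
  finally show ?thesis .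
qed



lemma dft_vanish:
  fixes w :: "'b::field"
  assumes wm: "w ^ m = 1" and wp: "\<And>s. 0 < s \<Longrightarrow> s < m \<Longrightarrow> w ^ s \<noteq> 1"
    and m0: "of_nat m \<noteq> (0::'b)"
    and h: "\<And>l. l < m \<Longrightarrow> (\<Sum>i<m. (w ^ i) ^ l * v i) = 0"
    and k: "k < m"
  shows "v k = 0"
proof -
  have "0 = (\<Sum>l<m. (w ^ (m - k)) ^ l * (\<Sum>i<m. (w ^ i) ^ l * v i))"
    using h by simp
  also have "\<dots> = (\<Sum>l<m. \<Sum>i<m. (w ^ (m - k)) ^ l * ((w ^ i) ^ l * v i))"
    by (simp only: sum_distrib_left)
  also have "\<dots> = (\<Sum>i<m. \<Sum>l<m. (w ^ (m - k)) ^ l * ((w ^ i) ^ l * v i))"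
    by (rule sum.swap)
  also have "\<dots> = (\<Sum>i<m. v i * (\<Sum>l<m. (w ^ (i + (m - k))) ^ l))"
  proof (rule sum.cong[OF refl])
    fix i
    have "\<And>l. (w ^ (m - k)) ^ l * ((w ^ i) ^ l * v i) = v i * (w ^ (i + (m - k))) ^ l"
      by (simp add: power_add power_mult_distrib)
    hence "(\<Sum>l<m. (w ^ (m - k)) ^ l * ((w ^ i) ^ l * v i)) = (\<Sum>l<m. v i * (w ^ (i + (m - k))) ^ l)"
      by (intro sum.cong) auto
    thus "(\<Sum>l<m. (w ^ (m - k)) ^ l * ((w ^ i) ^ l * v i)) = v i * (\<Sum>l<m. (w ^ (i + (m - k))) ^ l)"
      by (simp only: sum_distrib_left)
  qed
  also have "\<dots> = (\<Sum>i<m. if i = k then v k * of_nat m else 0)"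
  proof (rule sum.cong[OF refl])
    fix i assume i: "i \<in> {..<m}"
    show "v i * (\<Sum>l<m. (w ^ (i + (m - k))) ^ l) = (if i = k then v k * of_nat m else 0)"
    proof (cases "i = k")
      case True
      hence "w ^ (i + (m - k)) = 1" using k wm by simp
      thus ?thesis using True by simp
    next
      case False
      have ne: "w ^ (i + (m - k)) \<noteq> 1"
      proof (cases "i < k")
        case True
        thus ?thesis using wp[of "i + (m - k)"] k by simp
      next
        case False
        hence "i > k" using \<open>i \<noteq> k\<close> by simp
        hence "i + (m - k) = (i - k) + m" using k by simp
        hence "w ^ (i + (m - k)) = w ^ (i - k)" using wm by (simp add: power_add)
        thus ?thesis using wp[of "i - k"] i \<open>i > k\<close> by simp
      qed
      have "(w ^ (i + (m - k))) ^ m = (w ^ m) ^ (i + (m - k))"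
        by (simp only: power_mult[symmetric] mult.commute)
      hence "(w ^ (i + (m - k))) ^ m = 1" using wm by simp
      hence "(\<Sum>l<m. (w ^ (i + (m - k))) ^ l) = 0"
        using ne by (simp add: sum_gp_strict)
      thus ?thesis using False by simp
    qed
  qed
  also have "\<dots> = v k * of_nat m" using k by simp
  finally show ?thesis using m0 by simp
qed



lemma sum_split_mn:
  fixes f :: "nat \<Rightarrow> 'b::comm_monoid_add"
  assumes "0 < m"
  shows "(\<Sum>i<m * n1. f i) = (\<Sum>k<m. \<Sum>t<n1. f (k + m * t))"
proof -
  have "(\<Sum>i<m * n1. f i) = (\<Sum>p\<in>{..<m} \<times> {..<n1}. f (fst p + m * snd p))"
  proof (rule sum.reindex_bij_witness[of _ "\<lambda>p. fst p + m * snd p" "\<lambda>i. (i mod m, i div m)"])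
    fix p assume p: "p \<in> {..<m} \<times> {..<n1}"
    obtain a b where ab: "p = (a, b)" by (cases p)
    have "a + m * b < m + m * b" using p ab by simp
    also have "\<dots> = m * (b + 1)" by simp
    also have "\<dots> \<le> m * n1" using p ab by (intro mult_le_mono2) simp
    finally show "fst p + m * snd p \<in> {..<m * n1}" using ab by simp
    show "((fst p + m * snd p) mod m, (fst p + m * snd p) div m) = p"
      using p ab by simp
  next
    fix i assume i: "i \<in> {..<m * n1}"
    show "fst (i mod m, i div m) + m * snd (i mod m, i div m) = i" by simp
    have "i div m < n1" using i assms by (simp add: div_less_iff_less_mult mult.commute)
    thus "(i mod m, i div m) \<in> {..<m} \<times> {..<n1}" using assms by simp
    show "f (fst (i mod m, i div m) + m * snd (i mod m, i div m)) = f i" by simp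
  qed
  also have "\<dots> = (\<Sum>k<m. \<Sum>t<n1. f (k + m * t))"
    by (simp add: sum.cartesian_product case_prod_beta)
  finally show ?thesis .
qed

lemma pow_mod_eq:
  fixes b :: "'b::comm_monoid_mult"
  assumes "b ^ N = 1"
  shows "b ^ (x mod N) = b ^ x"
proof -
  have "b ^ x = b ^ (N * (x div N) + x mod N)" by simp
  also have "\<dots> = (b ^ N) ^ (x div N) * b ^ (x mod N)" by (simp only: power_add power_mult)
  finally show ?thesis using assms by simp
qed


theorem theorem2:
  fixes emb :: "'a::{finite,field} \<Rightarrow> 'b::field"
    and C :: "(nat \<Rightarrow> 'a) set"
    and n n1 \<delta> :: nat and \<alpha> :: 'b and X :: "nat set"
  assumes "field_embedding emb"
    and "0 < n" and "coprime n CARD('a)"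
    and "cyclic_code n C"
    and "primitive_root n \<alpha>"
    and "0 < n1" and "n1 dvd n"
    and "X \<subseteq> {..<n1}"
    and "min_dist_ge n1
           (code_with_zeros emb n1 (\<alpha> ^ (n div n1)) (\<Union>j\<in>X. cyclotomic_coset CARD('a) n1 j)) \<delta>"
    and "(\<Union>j\<in>X. {j + l * n1 | l. l < n div n1}) \<subseteq> zero_set emb n \<alpha> C"
  shows "all_symbol_locality n C (n1 - \<delta> + 1) \<delta>"
proof -
  note femb = assms(1)
  define m where "m = n div n1"
  define \<beta> where "\<beta> = \<alpha> ^ m"
  define \<gamma> where "\<gamma> = \<alpha> ^ n1"
  define q where "q = CARD('a)"
  have nm: "n = m * n1" using assms(7) unfolding m_def by simp
  have m0: "0 < m" using nm assms(2) by (cases m) auto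
  have an: "\<alpha> ^ n = 1" and ap: "\<And>k. 0 < k \<Longrightarrow> k < n \<Longrightarrow> \<alpha> ^ k \<noteq> 1"
    using assms(5) unfolding primitive_root_def by auto
  have a0: "\<alpha> \<noteq> 0" using an assms(2) by (cases n) auto
  have bn1: "\<beta> ^ n1 = 1" unfolding \<beta>_def using an nm by (simp flip: power_mult add: mult.commute)
  have gm: "\<gamma> ^ m = 1" unfolding \<gamma>_def using an nm by (simp flip: power_mult add: mult.commute)
  have gp: "\<gamma> ^ s \<noteq> 1" if "0 < s" "s < m" for s
  proof -
    have "n1 * s < n" using that assms(6) nm by simp
    moreover have "0 < n1 * s" using that assms(6) by simp
    ultimately show ?thesis using ap unfolding \<gamma>_def by (simp flip: power_mult)
  qed
  have mnz: "of_nat m \<noteq> (0::'b)"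
  proof
    assume "of_nat m = (0::'b)"
    hence "CHAR('b) dvd m" by (simp add: of_nat_eq_0_iff_char_dvd)
    hence pm: "CHAR('a) dvd m" using CHAR_emb[OF femb] by simp
    obtain e where e: "CARD('a) = CHAR('a) ^ e" using ff_card_prime_power by blast
    have "CARD('a) \<noteq> 1"
    proof
      assume "CARD('a) = 1"
      hence "(0::'a) = 1" using card_1_singletonE[of "UNIV::'a set"] by (metis UNIV_I singletonD)
      thus False by simp
    qed
    hence "e \<noteq> 0" using e by auto
    hence "CHAR('a) dvd CARD('a)" using e by simp
    moreover have "CHAR('a) dvd n" using pm nm by simp
    ultimately have "CHAR('a) dvd gcd n CARD('a)" by simp
    thus False using assms(3) ff_CHAR_prime by (simp add: not_prime_1)
  qed
  define D where "D c k y = (\<Sum>t<n1. emb (c (k + m * t)) * y ^ t)" for c :: "nat \<Rightarrow> 'a" and k y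
  have key: "D c k (\<beta> ^ j) = 0" if c: "c \<in> C" and k: "k < m" and j: "j \<in> X" for c k j
  proof -
    define v where "v k' = \<alpha> ^ (j * k') * D c k' (\<beta> ^ j)" for k'
    have "(\<Sum>i<m. (\<gamma> ^ i) ^ l * v i) = 0" if l: "l < m" for l
    proof -
      have "j + l * n1 \<in> zero_set emb n \<alpha> C" using assms(10) j l unfolding m_def by blast
      hence "word_eval emb n c (\<alpha> ^ (j + l * n1)) = 0" using c unfolding zero_set_def by blast
      hence "0 = (\<Sum>i<m * n1. emb (c i) * (\<alpha> ^ (j + l * n1)) ^ i)"
        unfolding word_eval_def nm by simp
      also have "\<dots> = (\<Sum>k'<m. \<Sum>t<n1. emb (c (k' + m * t)) * (\<alpha> ^ (j + l * n1)) ^ (k' + m * t))"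
        by (rule sum_split_mn[OF m0])
      also have "\<dots> = (\<Sum>k'<m. (\<gamma> ^ k') ^ l * v k')"
      proof (rule sum.cong[OF refl])
        fix k'
        have ex: "(j + l * n1) * (k' + m * t) = j * k' + n1 * k' * l + t * j * m + n * (l * t)" for t
          by (simp add: nm algebra_simps)
        have pw: "(\<alpha> ^ (j + l * n1)) ^ (k' + m * t) = (\<gamma> ^ k') ^ l * (\<alpha> ^ (j * k') * (\<beta> ^ j) ^ t)" for t
        proof -
          have "(\<alpha> ^ (j + l * n1)) ^ (k' + m * t) = \<alpha> ^ (j * k') * \<alpha> ^ (n1 * k' * l) * \<alpha> ^ (t * j * m) * \<alpha> ^ (n * (l * t))"
          proof -
            have "(\<alpha> ^ (j + l * n1)) ^ (k' + m * t) = \<alpha> ^ ((j + l * n1) * (k' + m * t))"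
              by (rule power_mult[symmetric])
            also have "\<dots> = \<alpha> ^ (j * k' + n1 * k' * l + t * j * m + n * (l * t))"
              by (simp only: ex)
            finally show ?thesis by (simp only: power_add)
          qed
          moreover have "\<alpha> ^ (n * (l * t)) = 1" by (simp add: power_mult an)
          moreover have "\<alpha> ^ (n1 * k' * l) = (\<gamma> ^ k') ^ l" unfolding \<gamma>_def by (simp add: power_mult)
          moreover have "(\<beta> ^ j) ^ t = \<alpha> ^ (t * j * m)" unfolding \<beta>_def
            by (simp only: power_mult[symmetric]) (simp add: mult_ac)
          ultimately show ?thesis by (simp add: mult_ac)
        qed
        hence "\<And>t. (\<alpha> ^ (j + l * n1)) ^ (k' + m * t) = (\<gamma> ^ k') ^ l * (\<alpha> ^ (j * k') * (\<beta> ^ j) ^ t)" .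
        hence "(\<Sum>t<n1. emb (c (k' + m * t)) * (\<alpha> ^ (j + l * n1)) ^ (k' + m * t))
           = (\<Sum>t<n1. (\<gamma> ^ k') ^ l * \<alpha> ^ (j * k') * (emb (c (k' + m * t)) * (\<beta> ^ j) ^ t))"
          by (intro sum.cong) (auto simp: mult_ac)
        also have "\<dots> = (\<gamma> ^ k') ^ l * v k'"
          unfolding v_def D_def by (simp add: sum_distrib_left mult_ac)
        finally show "(\<Sum>t<n1. emb (c (k' + m * t)) * (\<alpha> ^ (j + l * n1)) ^ (k' + m * t)) = (\<gamma> ^ k') ^ l * v k'" .
      qed
      finally show ?thesis by simp
    qed
    hence "v k = 0" using dft_vanish[OF gm gp mnz _ k] by blast
    thus ?thesis unfolding v_def using a0 by simp
  qed
  have incode: "(\<lambda>t. if t < n1 then c (k + m * t) else 0)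
      \<in> code_with_zeros emb n1 (\<alpha> ^ (n div n1)) (\<Union>j\<in>X. cyclotomic_coset CARD('a) n1 j)"
    if c: "c \<in> C" and k: "k < m" for c k
  proof -
    let ?d = "\<lambda>t. if t < n1 then c (k + m * t) else 0"
    have ev: "word_eval emb n1 ?d y = D c k y" for y
      unfolding word_eval_def D_def by (intro sum.cong) auto
    have "word_eval emb n1 ?d (\<beta> ^ z) = 0" if z: "z \<in> cyclotomic_coset CARD('a) n1 j" and j: "j \<in> X" for z j
    proof -
      obtain s where s: "z = (CARD('a) ^ s * j) mod n1" using z unfolding cyclotomic_coset_def by blast
      have "\<beta> ^ z = (\<beta> ^ j) ^ (CARD('a) ^ s)"
        unfolding s pow_mod_eq[OF bn1] by (simp add: power_mult mult.commute)
      hence "D c k (\<beta> ^ z) = (D c k (\<beta> ^ j)) ^ (CARD('a) ^ s)"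
        unfolding D_def using frob_eval[OF femb, where d="\<lambda>t. c (k + m * t)" and N=n1 and y="\<beta> ^ j" and s=s] by simp
      thus ?thesis using ev key[OF c k j] by simp
    qed
    moreover have "is_word n1 ?d" unfolding is_word_def by simp
    ultimately show ?thesis unfolding code_with_zeros_def \<beta>_def m_def by blast
  qed
  show ?thesis
    unfolding all_symbol_locality_def
  proof (intro allI impI)
    fix i assume i: "i < n"
    define k where "k = i mod m"
    have k: "k < m" unfolding k_def using m0 by simp
    define I where "I = (\<lambda>t. k + m * t) ` {..<n1}"
    have inj: "inj_on (\<lambda>t. k + m * t) A" for A using m0 by (auto simp: inj_on_def)
    have "I \<subseteq> {..<n}"
    proof
      fix x assume "x \<in> I"
      then obtain t where t: "t < n1" "x = k + m * t" unfolding I_def by blast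
      have "k + m * t < m + m * t" using k by simp
      also have "\<dots> = m * (t + 1)" by simp
      also have "\<dots> \<le> m * n1" using t by (intro mult_le_mono2) simp
      finally show "x \<in> {..<n}" using t nm by simp
    qed
    moreover have "i \<in> I"
    proof -
      have "i div m < n1" using i nm m0 by (simp add: div_less_iff_less_mult mult.commute)
      moreover have "i = k + m * (i div m)" unfolding k_def by simp
      ultimately show ?thesis unfolding I_def by blast
    qed
    moreover have "card I \<le> n1 - \<delta> + 1 + \<delta> - 1"
    proof -
      have "card I = n1" unfolding I_def using card_image[OF inj] by simp
      thus ?thesis by simp
    qed
    moreover have "punctured_min_dist_ge C I \<delta>"
      unfolding punctured_min_dist_ge_def
    proof (intro ballI impI)
      fix c assume c: "c \<in> C" and nz: "\<exists>i\<in>I. c i \<noteq> 0"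
      let ?d = "\<lambda>t. if t < n1 then c (k + m * t) else 0"
      have "\<exists>t<n1. ?d t \<noteq> 0" using nz unfolding I_def by auto
      moreover have "(\<exists>t<n1. ?d t \<noteq> 0) \<longrightarrow> \<delta> \<le> weight_on {..<n1} ?d"
        using bspec[OF assms(9)[unfolded min_dist_ge_def] incode[OF c k]] .
      ultimately have "\<delta> \<le> weight_on {..<n1} ?d" by blast
      also have "weight_on {..<n1} ?d = weight_on I c"
      proof -
        have "{x\<in>I. c x \<noteq> 0} = (\<lambda>t. k + m * t) ` {t\<in>{..<n1}. ?d t \<noteq> 0}"
          unfolding I_def by auto
        hence "card {x\<in>I. c x \<noteq> 0} = card {t\<in>{..<n1}. ?d t \<noteq> 0}"
          using card_image[OF inj] by simp
        thus ?thesis unfolding weight_on_def by simp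
      qed
      finally show "\<delta> \<le> weight_on I c" .
    qed
    ultimately show "\<exists>I\<subseteq>{..<n}. i \<in> I \<and> card I \<le> n1 - \<delta> + 1 + \<delta> - 1 \<and> punctured_min_dist_ge C I \<delta>"
      by blast
  qed
qed

end
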